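(* For every positive integer $N$ and every pair of indices $\boldsymbol{k}=(k_1,\dots,k_r)$, $\boldsymbol{l}=(l_1,\dots,l_r)$ of the same depth $r\ge1$, \[ \sum_{\substack{0<m_{j,1}\le\cdots\le m_{j,l_j}<N\ (j\in[r])\\ m_{j,l_j}<m_{j+1,1}\ (j\in[r-1])}}\ \prod_{j\in[r]}\frac1{(N-m_{j,1})\cdots(N-m_{j,l_j-1})\,m_{j,l_j}^{k_j}} =\sum_{\substack{0<n_{i,1}\le\cdots\le n_{i,k_i}<N\ (i\in[r])\\ n_{i,k_i}<n_{i+1,1}\ (i\in[r-1])}}\ \prod_{i\in[r]}\frac1{(N-n_{i,1})^{l_i}\,n_{i,2}\cdots n_{i,k_i}}. \]
   Context: $[n]=\{1,\dots,n\}$. An index is a tuple of positive integers. All variables $m_{j,\cdot},n_{i,\cdot}$ range over integers; empty products equal $1$ (e.g. when $l_j=1$ the product $(N-m_{j,1})\cdots(N-m_{j,l_j-1})$ is empty, and when $k_i=1$ the product $n_{i,2}\cdots n_{i,k_i}$ is empty). *)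

theory Defs
  imports Main "HOL.Real"
begin

text \<open>A configuration of summation variables for block lengths ls = (l_1,...,l_r):
  a list of r blocks, block j being the list (m_{j,1},...,m_{j,l_j}) (0-based in Isabelle),
  with 0 < m_{j,1} <= ... <= m_{j,l_j} < N and m_{j,l_j} < m_{j+1,1}.\<close>

definition admissible :: "nat \<Rightarrow> nat list \<Rightarrow> nat list list \<Rightarrow> bool" where
  "admissible N ls ms \<longleftrightarrow>
     length ms = length ls \<and>
     (\<forall>j<length ms. length (ms!j) = ls!j) \<and>
     (\<forall>j<length ms. \<forall>a<length (ms!j). 0 < ms!j!a \<and> ms!j!a < N) \<and>
     (\<forall>j<length ms. \<forall>a. a + 1 < length (ms!j) \<longrightarrow> ms!j!a \<le> ms!j!(a+1)) \<and>
     (\<forall>j. j + 1 < length ms \<longrightarrow> ms!j!(length (ms!j) - 1) < ms!(j+1)!0)"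

definition lhs_term :: "nat \<Rightarrow> nat list \<Rightarrow> nat list \<Rightarrow> nat list list \<Rightarrow> real" where
  "lhs_term N ks ls ms =
     (\<Prod>j<length ks. 1 / ((\<Prod>a<ls!j - 1. (real N - real (ms!j!a)))
                           * real (ms!j!(ls!j - 1)) ^ (ks!j)))"

definition rhs_term :: "nat \<Rightarrow> nat list \<Rightarrow> nat list \<Rightarrow> nat list list \<Rightarrow> real" where
  "rhs_term N ks ls ns =
     (\<Prod>i<length ks. 1 / ((real N - real (ns!i!0)) ^ (ls!i)
                           * (\<Prod>a\<in>{1..<ks!i}. real (ns!i!a))))"

end

theory Submission imports Defs begin

definition cc :: "nat \<Rightarrow> nat \<Rightarrow> nat \<Rightarrow> real" where
  "cc N \<mu> \<pi> = real ((N - 1 - \<mu>) choose \<pi>) / real ((N - 1) choose \<pi>)"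

lemma cc_sym: "\<mu> < N \<Longrightarrow> \<pi> < N \<Longrightarrow> cc N \<mu> \<pi> = cc N \<pi> \<mu>"
proof (cases "\<mu> + \<pi> \<le> N - 1")
  case True
  define n where "n = N - 1"
  have h1: "(n choose (\<mu>+\<pi>)) * ((\<mu>+\<pi>) choose \<mu>) = (n choose \<mu>) * ((n - \<mu>) choose \<pi>)"
    using choose_mult[of \<mu> "\<mu>+\<pi>" n] True n_def by simp
  have h2: "(n choose (\<mu>+\<pi>)) * ((\<mu>+\<pi>) choose \<pi>) = (n choose \<pi>) * ((n - \<pi>) choose \<mu>)"
    using choose_mult[of \<pi> "\<mu>+\<pi>" n] True n_def by simp
  have h3: "((\<mu>+\<pi>) choose \<mu>) = ((\<mu>+\<pi>) choose \<pi>)"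
    by (metis add_diff_cancel_left' binomial_symmetric le_add1)
  have e: "(n choose \<mu>) * ((n - \<mu>) choose \<pi>) = (n choose \<pi>) * ((n - \<pi>) choose \<mu>)"
    using h1 h2 h3 by simp
  have p1: "(n choose \<mu>) > 0" "(n choose \<pi>) > 0" using True n_def by auto
  have "real (n choose \<mu>) * real ((n - \<mu>) choose \<pi>) = real (n choose \<pi>) * real ((n - \<pi>) choose \<mu>)"
    using e by (metis of_nat_mult)
  then show ?thesis using p1 unfolding cc_def n_def[symmetric]
    by (simp add: field_simps)
next
  case False
  assume "\<mu> < N" "\<pi> < N"
  then have "N - 1 - \<mu> < \<pi>" "N - 1 - \<pi> < \<mu>" using False by auto
  then show ?thesis unfolding cc_def by (simp add: binomial_eq_0)
qed

lemma cc_step: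
  assumes "\<mu> + 2 \<le> N"
  shows "cc N \<mu> \<pi> - cc N (Suc \<mu>) \<pi> = cc N \<mu> \<pi> * real \<pi> / real (N - 1 - \<mu>)"
proof -
  define n where "n = N - 1 - \<mu>"
  have n1: "n \<ge> 1" using assms n_def by auto
  have nn: "N - 1 - Suc \<mu> = n - 1" using n_def by auto
  have ab: "(n - \<pi>) * (n choose \<pi>) = n * ((n - 1) choose \<pi>)" by (rule binomial_absorb_comp)
  show ?thesis
  proof (cases "\<pi> \<le> n")
    case True
    have "real (n - \<pi>) * real (n choose \<pi>) = real n * real ((n - 1) choose \<pi>)"
      using ab by (metis of_nat_mult)
    then have "(real n - real \<pi>) * real (n choose \<pi>) = real n * real ((n - 1) choose \<pi>)"
      using True by (simp add: of_nat_diff)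
    then have e: "real ((n - 1) choose \<pi>) = (real n - real \<pi>) * real (n choose \<pi>) / real n"
      using n1 by (simp add: field_simps)
    show ?thesis
    proof (cases "real ((N - 1) choose \<pi>) = 0")
      case True
      show ?thesis unfolding cc_def by (simp only: True) simp
    next
      case False
      then show ?thesis unfolding cc_def n_def[symmetric] nn e using n1
        by (simp add: field_simps)
    qed
  next
    case False
    then show ?thesis unfolding cc_def n_def[symmetric] nn by (simp add: binomial_eq_0)
  qed
qed

lemma cc_last: "1 \<le> \<pi> \<Longrightarrow> cc N (N - 1) \<pi> = 0"
  unfolding cc_def by simp

lemma cc_0_right: "cc N \<mu> 0 = 1" unfolding cc_def by simp
lemma cc_0_left: "\<pi> < N \<Longrightarrow> cc N 0 \<pi> = 1" unfolding cc_def by simp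

lemma K1:
  assumes "\<rho> + 2 \<le> N" "1 \<le> \<pi>"
  shows "(\<Sum>\<mu>\<in>{\<rho>..<N-1}. cc N \<mu> \<pi> / real (N - 1 - \<mu>)) = cc N \<rho> \<pi> / real \<pi>"
proof -
  have "(\<Sum>\<mu>\<in>{\<rho>..<N-1}. cc N \<mu> \<pi> / real (N - 1 - \<mu>))
      = (\<Sum>\<mu>\<in>{\<rho>..<N-1}. (cc N \<mu> \<pi> - cc N (Suc \<mu>) \<pi>) / real \<pi>)"
  proof (rule sum.cong[OF refl])
    fix \<mu> assume "\<mu> \<in> {\<rho>..<N-1}"
    then have "\<mu> + 2 \<le> N" by auto
    from cc_step[OF this, of \<pi>] show "cc N \<mu> \<pi> / real (N - 1 - \<mu>) = (cc N \<mu> \<pi> - cc N (Suc \<mu>) \<pi>) / real \<pi>"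
      using assms by (simp add: field_simps)
  qed
  also have "\<dots> = - (\<Sum>\<mu>\<in>{\<rho>..<N-1}. cc N (Suc \<mu>) \<pi> - cc N \<mu> \<pi>) / real \<pi>"
    by (simp add: sum_divide_distrib[symmetric] sum_negf[symmetric])
  also have "\<dots> = (cc N \<rho> \<pi> - cc N (N-1) \<pi>) / real \<pi>"
    using sum_Suc_diff'[of \<rho> "N-1" "\<lambda>\<mu>. cc N \<mu> \<pi>"] assms by simp
  finally show ?thesis using cc_last[OF assms(2)] by simp
qed

lemma sum_choose_lt: "(\<Sum>j<d. j choose \<pi>) = d choose Suc \<pi>"
  by (induction d) auto

lemma K2nat:
  assumes "\<rho> < N"
  shows "(\<Sum>\<mu>\<in>{\<rho><..<N}. (N - 1 - \<mu>) choose \<pi>) = (N - 1 - \<rho>) choose Suc \<pi>"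
proof -
  have "(\<Sum>\<mu>\<in>{\<rho><..<N}. (N - 1 - \<mu>) choose \<pi>) = (\<Sum>j<N - 1 - \<rho>. j choose \<pi>)"
    by (rule sum.reindex_bij_witness[where i="\<lambda>j. N - 1 - j" and j="\<lambda>\<mu>. N - 1 - \<mu>"]) auto
  then show ?thesis by (simp add: sum_choose_lt)
qed

lemma K2:
  assumes "\<rho> < N" "\<pi> + 2 \<le> N"
  shows "(\<Sum>\<mu>\<in>{\<rho><..<N}. cc N \<mu> \<pi>) = cc N \<rho> (Suc \<pi>) * real (N - 1 - \<pi>) / real (Suc \<pi>)"
proof -
  have b: "real ((N-1) choose Suc \<pi>) * real (Suc \<pi>) = real ((N-1) choose \<pi>) * real (N - 1 - \<pi>)"
  proof -
    define n' where "n' = N - 2"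
    have n': "N - 1 = Suc n'" using assms n'_def by simp
    have "((N-1) choose Suc \<pi>) * Suc \<pi> = ((N-1) choose \<pi>) * (N - 1 - \<pi>)"
    proof -
      have h: "(Suc n' - \<pi>) * (Suc n' choose \<pi>) = Suc n' * (n' choose \<pi>)"
        using binomial_absorb_comp[of "Suc n'" \<pi>] by (simp only: diff_Suc_1)
      have "(Suc n' choose Suc \<pi>) * Suc \<pi> = Suc n' * (n' choose \<pi>)"
        by (rule Suc_times_binomial_eq[symmetric])
      also have "\<dots> = (Suc n' - \<pi>) * (Suc n' choose \<pi>)"
        by (rule h[symmetric])
      also have "\<dots> = (Suc n' choose \<pi>) * (Suc n' - \<pi>)" by (rule mult.commute)
      finally show ?thesis unfolding n' .
    qed
    then show ?thesis by (metis of_nat_mult)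
  qed
  have pos1: "(N-1) choose \<pi> > 0" "(N-1) choose Suc \<pi> > 0" using assms by auto
  have "(\<Sum>\<mu>\<in>{\<rho><..<N}. cc N \<mu> \<pi>) = real ((N - 1 - \<rho>) choose Suc \<pi>) / real ((N - 1) choose \<pi>)"
    unfolding cc_def using K2nat[OF assms(1), of \<pi>]
    by (simp add: sum_divide_distrib[symmetric] flip: of_nat_sum)
  also have "\<dots> = cc N \<rho> (Suc \<pi>) * real (N - 1 - \<pi>) / real (Suc \<pi>)"
  proof -
    define A where "A = real ((N - 1 - \<rho>) choose Suc \<pi>)"
    define D0 where "D0 = real ((N - 1) choose \<pi>)"
    define D1 where "D1 = real ((N - 1) choose Suc \<pi>)"
    define X where "X = real (N - 1 - \<pi>)"
    define S where "S = real (Suc \<pi>)"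
    have nz: "D0 \<noteq> 0" "D1 \<noteq> 0" "X \<noteq> 0" "S \<noteq> 0"
      using pos1 assms unfolding D0_def D1_def X_def S_def by auto
    have bb: "D1 * S = D0 * X" using b unfolding D0_def D1_def X_def S_def .
    have "A / D1 * X / S = A * X / (D1 * S)" by simp
    also have "\<dots> = A * X / (D0 * X)" by (simp only: bb)
    also have "\<dots> = A / D0" using nz by simp
    finally have "A / D0 = A / D1 * X / S" by simp
    then show ?thesis unfolding cc_def A_def D0_def D1_def X_def S_def by simp
  qed
  finally show ?thesis .
qed


definition opY :: "nat \<Rightarrow> (nat \<Rightarrow> real) \<Rightarrow> nat \<Rightarrow> real" where
  "opY N f \<mu> = (if \<mu> + 2 \<le> N then (\<Sum>\<rho>\<le>\<mu>. f \<rho>) / real (N - 1 - \<mu>) else 0)"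
definition opP :: "nat \<Rightarrow> (nat \<Rightarrow> real) \<Rightarrow> nat \<Rightarrow> real" where
  "opP N f \<mu> = (if 1 \<le> \<mu> \<and> \<mu> < N then (\<Sum>\<rho><\<mu>. f \<rho>) else 0)"
definition opX :: "(nat \<Rightarrow> real) \<Rightarrow> nat \<Rightarrow> real" where
  "opX f \<mu> = f \<mu> / real \<mu>"
definition Z :: "nat \<Rightarrow> (nat \<Rightarrow> real) \<Rightarrow> (nat \<Rightarrow> real) \<Rightarrow> real" where
  "Z N f g = (\<Sum>\<mu><N. \<Sum>\<pi><N. f \<mu> * g \<pi> * cc N \<mu> \<pi>)"

lemma tri_le: "(\<Sum>\<mu><(M::nat). \<Sum>\<rho>\<le>\<mu>. F \<rho> \<mu>) = (\<Sum>\<rho><M. \<Sum>\<mu>\<in>{\<rho>..<M}. F \<rho> \<mu> :: real)"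
proof (induction M)
  case 0 then show ?case by simp
next
  case (Suc M)
  have "(\<Sum>\<rho><Suc M. \<Sum>\<mu>\<in>{\<rho>..<Suc M}. F \<rho> \<mu>) = (\<Sum>\<rho><Suc M. (\<Sum>\<mu>\<in>{\<rho>..<M}. F \<rho> \<mu>) + F \<rho> M)"
    by (rule sum.cong[OF refl]) auto
  also have "\<dots> = (\<Sum>\<rho><M. \<Sum>\<mu>\<in>{\<rho>..<M}. F \<rho> \<mu>) + (\<Sum>\<rho>\<le>M. F \<rho> M)"
    by (simp add: sum.distrib lessThan_Suc_atMost[symmetric])
  finally show ?case using Suc by simp
qed

lemma tri_lt: "(\<Sum>\<mu><(M::nat). \<Sum>\<rho><\<mu>. F \<rho> \<mu>) = (\<Sum>\<rho><M. \<Sum>\<mu>\<in>{\<rho><..<M}. F \<rho> \<mu> :: real)"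
proof (induction M)
  case 0 then show ?case by simp
next
  case (Suc M)
  have "(\<Sum>\<rho><Suc M. \<Sum>\<mu>\<in>{\<rho><..<Suc M}. F \<rho> \<mu>) = (\<Sum>\<rho><Suc M. (\<Sum>\<mu>\<in>{\<rho><..<M}. F \<rho> \<mu>) + (if \<rho> < M then F \<rho> M else 0))"
  proof (rule sum.cong[OF refl])
    fix x assume "x \<in> {..<Suc M}"
    show "(\<Sum>\<mu>\<in>{x<..<Suc M}. F x \<mu>) = (\<Sum>\<mu>\<in>{x<..<M}. F x \<mu>) + (if x < M then F x M else 0)"
    proof (cases "x < M")
      case True
      then have "{x<..<Suc M} = insert M {x<..<M}" by auto
      then show ?thesis using True by simp
    next
      case False
      then have "{x<..<Suc M} = {}" "{x<..<M} = {}" by auto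
      then show ?thesis using False by simp
    qed
  qed
  also have "\<dots> = (\<Sum>\<rho><M. \<Sum>\<mu>\<in>{\<rho><..<M}. F \<rho> \<mu>) + (\<Sum>\<rho><M. F \<rho> M)"
    by (simp add: sum.distrib sum.If_cases)
  finally show ?case using Suc by simp
qed

lemma Z_sym: "Z N f g = Z N g f"
  unfolding Z_def
  by (subst sum.swap) (auto intro!: sum.cong simp: cc_sym mult.commute mult.left_commute)

lemma M1_inner:
  assumes "1 \<le> \<pi>" "\<pi> < N"
  shows "(\<Sum>\<mu><N. opY N f \<mu> * cc N \<mu> \<pi>) = (\<Sum>\<rho><N. f \<rho> * cc N \<rho> \<pi>) / real \<pi>"
proof -
  obtain M where M: "N = Suc M" using assms by (cases N) auto
  have "(\<Sum>\<mu><N. opY N f \<mu> * cc N \<mu> \<pi>) = (\<Sum>\<mu><M. (\<Sum>\<rho>\<le>\<mu>. f \<rho> * (cc N \<mu> \<pi> / real (N - 1 - \<mu>))))"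
    unfolding M by (simp add: opY_def sum_distrib_right sum_divide_distrib)
  also have "\<dots> = (\<Sum>\<rho><M. \<Sum>\<mu>\<in>{\<rho>..<M}. f \<rho> * (cc N \<mu> \<pi> / real (N - 1 - \<mu>)))"
    by (rule tri_le)
  also have "\<dots> = (\<Sum>\<rho><M. f \<rho> * (cc N \<rho> \<pi> / real \<pi>))"
  proof (rule sum.cong[OF refl])
    fix \<rho> assume "\<rho> \<in> {..<M}"
    then have "\<rho> + 2 \<le> N" using M by auto
    then show "(\<Sum>\<mu>\<in>{\<rho>..<M}. f \<rho> * (cc N \<mu> \<pi> / real (N - 1 - \<mu>))) = f \<rho> * (cc N \<rho> \<pi> / real \<pi>)"
      using K1[of \<rho> N \<pi>] assms M sum_distrib_left[symmetric, of "f \<rho>" "\<lambda>\<mu>. cc N \<mu> \<pi> / real (N - 1 - \<mu>)" "{\<rho>..<M}"]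
      by simp
  qed
  also have "\<dots> = (\<Sum>\<rho><N. f \<rho> * cc N \<rho> \<pi>) / real \<pi>"
    unfolding M using cc_last[OF assms(1), of N] M by (simp add: sum_divide_distrib)
  finally show ?thesis .
qed

lemma M1:
  assumes "g 0 = 0"
  shows "Z N (opY N f) g = Z N f (opX g)"
proof -
  have "Z N (opY N f) g = (\<Sum>\<pi><N. g \<pi> * (\<Sum>\<mu><N. opY N f \<mu> * cc N \<mu> \<pi>))"
    unfolding Z_def by (subst sum.swap) (simp add: sum_distrib_left mult.commute mult.left_commute)
  also have "\<dots> = (\<Sum>\<pi><N. g \<pi> * ((\<Sum>\<rho><N. f \<rho> * cc N \<rho> \<pi>) / real \<pi>))"
  proof (rule sum.cong[OF refl])
    fix \<pi> assume p: "\<pi> \<in> {..<N}"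
    show "g \<pi> * (\<Sum>\<mu><N. opY N f \<mu> * cc N \<mu> \<pi>) = g \<pi> * ((\<Sum>\<rho><N. f \<rho> * cc N \<rho> \<pi>) / real \<pi>)"
    proof (cases "\<pi> = 0")
      case True then show ?thesis using assms by simp
    next
      case False then show ?thesis using M1_inner[of \<pi> N f] p by simp
    qed
  qed
  also have "\<dots> = (\<Sum>\<pi><N. \<Sum>\<mu><N. f \<mu> * (g \<pi> / real \<pi>) * cc N \<mu> \<pi>)"
    by (simp add: sum_distrib_left sum_divide_distrib mult.commute mult.left_commute)
  also have "\<dots> = Z N f (opX g)"
    unfolding Z_def opX_def by (rule sum.swap)
  finally show ?thesis .
qed

lemma M1':
  assumes "f 0 = 0"
  shows "Z N (opX f) g = Z N f (opY N g)"
  using M1[where g=f and f=g and N=N] assms Z_sym by metis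

lemma M2_inner:
  assumes "\<pi> + 2 \<le> N"
  shows "(\<Sum>\<mu><N. opP N f \<mu> * cc N \<mu> \<pi>) = (\<Sum>\<rho><N. f \<rho> * cc N \<rho> (Suc \<pi>)) * real (N - 1 - \<pi>) / real (Suc \<pi>)"
proof -
  have "(\<Sum>\<mu><N. opP N f \<mu> * cc N \<mu> \<pi>) = (\<Sum>\<mu><N. \<Sum>\<rho><\<mu>. f \<rho> * cc N \<mu> \<pi>)"
    by (rule sum.cong[OF refl]) (auto simp: opP_def sum_distrib_right Suc_le_eq)
  also have "\<dots> = (\<Sum>\<rho><N. \<Sum>\<mu>\<in>{\<rho><..<N}. f \<rho> * cc N \<mu> \<pi>)" by (rule tri_lt)
  also have "\<dots> = (\<Sum>\<rho><N. f \<rho> * (cc N \<rho> (Suc \<pi>) * real (N - 1 - \<pi>) / real (Suc \<pi>)))"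
  proof (rule sum.cong[OF refl])
    fix \<rho> assume "\<rho> \<in> {..<N}"
    then have "\<rho> < N" by simp
    have "(\<Sum>\<mu>\<in>{\<rho><..<N}. f \<rho> * cc N \<mu> \<pi>) = f \<rho> * (\<Sum>\<mu>\<in>{\<rho><..<N}. cc N \<mu> \<pi>)"
      by (rule sum_distrib_left[symmetric])
    then show "(\<Sum>\<mu>\<in>{\<rho><..<N}. f \<rho> * cc N \<mu> \<pi>) = f \<rho> * (cc N \<rho> (Suc \<pi>) * real (N - 1 - \<pi>) / real (Suc \<pi>))"
      using K2[OF \<open>\<rho> < N\<close> assms] by simp
  qed
  finally show ?thesis by (simp add: sum_distrib_right sum_divide_distrib mult.assoc)
qed

lemma M2:
  assumes "1 \<le> N"
  shows "Z N (opP N f) (opY N g) = Z N f (opX (opP N g))"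
proof -
  define H where "H \<pi> = (\<Sum>\<rho><N. f \<rho> * cc N \<rho> \<pi>)" for \<pi>
  obtain M where M: "N = Suc M" using assms by (cases N) auto
  have "Z N (opP N f) (opY N g) = (\<Sum>\<pi><N. opY N g \<pi> * (\<Sum>\<mu><N. opP N f \<mu> * cc N \<mu> \<pi>))"
    unfolding Z_def by (subst sum.swap) (simp add: sum_distrib_left mult.commute mult.left_commute)
  also have "\<dots> = (\<Sum>\<pi><M. (\<Sum>\<sigma>\<le>\<pi>. g \<sigma>) / real (Suc \<pi>) * H (Suc \<pi>))"
  proof -
    have "(\<Sum>\<pi><N. opY N g \<pi> * (\<Sum>\<mu><N. opP N f \<mu> * cc N \<mu> \<pi>)) = (\<Sum>\<pi><M. opY N g \<pi> * (\<Sum>\<mu><N. opP N f \<mu> * cc N \<mu> \<pi>))"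
      unfolding M by (simp add: opY_def)
    also have "\<dots> = (\<Sum>\<pi><M. (\<Sum>\<sigma>\<le>\<pi>. g \<sigma>) / real (Suc \<pi>) * H (Suc \<pi>))"
    proof (rule sum.cong[OF refl])
      fix \<pi> assume "\<pi> \<in> {..<M}"
      then have p: "\<pi> + 2 \<le> N" "real (N - 1 - \<pi>) \<noteq> 0" using M by auto
      show "opY N g \<pi> * (\<Sum>\<mu><N. opP N f \<mu> * cc N \<mu> \<pi>) = (\<Sum>\<sigma>\<le>\<pi>. g \<sigma>) / real (Suc \<pi>) * H (Suc \<pi>)"
        unfolding M2_inner[OF p(1)] H_def[symmetric] using p by (simp add: opY_def)
    qed
    finally show ?thesis .
  qed
  also have "\<dots> = (\<Sum>\<pi><N. opX (opP N g) \<pi> * H \<pi>)"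
    unfolding M sum.lessThan_Suc_shift
    by (simp add: opX_def opP_def lessThan_Suc_atMost M)
  also have "\<dots> = (\<Sum>\<pi><N. \<Sum>\<mu><N. f \<mu> * opX (opP N g) \<pi> * cc N \<mu> \<pi>)"
    unfolding H_def by (simp add: sum_distrib_left mult.commute mult.left_commute)
  also have "\<dots> = Z N f (opX (opP N g))"
    unfolding Z_def by (rule sum.swap)
  finally show ?thesis .
qed


definition blockop :: "nat \<Rightarrow> nat \<Rightarrow> nat \<Rightarrow> (nat \<Rightarrow> real) \<Rightarrow> nat \<Rightarrow> real" where
  "blockop N k l f = (opX ^^ k) (opP N ((opY N ^^ (l - 1)) f))"

lemma opX_pow_0: "h 0 = 0 \<Longrightarrow> ((opX ^^ k) h) 0 = 0"
  by (induction k) (auto simp: opX_def)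

lemma opX0: "opX h 0 = 0" by (simp add: opX_def)

lemma subA: "h 0 = 0 \<Longrightarrow> Z N ((opX ^^ k) h) g = Z N h ((opY N ^^ k) g)"
proof (induction k arbitrary: g)
  case 0 then show ?case by simp
next
  case (Suc k)
  have "Z N ((opX ^^ Suc k) h) g = Z N (opX ((opX ^^ k) h)) g" by simp
  also have "\<dots> = Z N ((opX ^^ k) h) (opY N g)" by (rule M1') (rule opX_pow_0[where h=h and k=k, OF Suc.prems])
  also have "\<dots> = Z N h ((opY N ^^ k) (opY N g))" by (rule Suc.IH[OF Suc.prems])
  also have "\<dots> = Z N h ((opY N ^^ Suc k) g)" by (simp add: funpow_Suc_right del: funpow.simps)
  finally show ?case .
qed

lemma subB: "G 0 = 0 \<Longrightarrow> Z N ((opY N ^^ j) h) G = Z N h ((opX ^^ j) G)"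
proof (induction j arbitrary: G)
  case 0 then show ?case by simp
next
  case (Suc j)
  have "Z N ((opY N ^^ Suc j) h) G = Z N (opY N ((opY N ^^ j) h)) G" by simp
  also have "\<dots> = Z N ((opY N ^^ j) h) (opX G)" by (rule M1) (rule Suc.prems)
  also have "\<dots> = Z N h ((opX ^^ j) (opX G))" by (rule Suc.IH) (rule opX0)
  also have "\<dots> = Z N h ((opX ^^ Suc j) G)" by (simp add: funpow_Suc_right del: funpow.simps)
  finally show ?case .
qed

lemma block_lemma:
  assumes "1 \<le> k" "1 \<le> l" "1 \<le> N"
  shows "Z N (blockop N k l f) g = Z N f (blockop N l k g)"
proof -
  define F where "F = (opY N ^^ (l - 1)) f"
  have F0: "opP N F 0 = 0" by (simp add: opP_def)
  have "Z N (blockop N k l f) g = Z N (opP N F) ((opY N ^^ k) g)"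
    unfolding blockop_def F_def[symmetric] by (rule subA[where h="opP N F", OF F0])
  also have "(opY N ^^ k) g = opY N ((opY N ^^ (k - 1)) g)"
    using assms(1) by (metis Suc_diff_1 comp_apply funpow.simps(2) less_le_trans zero_less_one)
  also have "Z N (opP N F) (opY N ((opY N ^^ (k - 1)) g)) = Z N F (opX (opP N ((opY N ^^ (k - 1)) g)))"
    by (rule M2[OF assms(3)])
  also have "\<dots> = Z N f ((opX ^^ (l - 1)) (opX (opP N ((opY N ^^ (k - 1)) g))))"
    unfolding F_def by (rule subB) (rule opX0)
  also have "(opX ^^ (l - 1)) (opX (opP N ((opY N ^^ (k - 1)) g))) = blockop N l k g"
    unfolding blockop_def using assms(2)
    by (metis Suc_diff_1 funpow_Suc_right comp_apply less_le_trans zero_less_one)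
  finally show ?thesis .
qed

fun fb :: "nat \<Rightarrow> nat list \<Rightarrow> nat list \<Rightarrow> (nat \<Rightarrow> real) \<Rightarrow> nat \<Rightarrow> real" where
  "fb N (k#ks) (l#ls) f = fb N ks ls (blockop N k l f)"
| "fb N _ _ f = f"

lemma fb_snoc: "length xs = length ys \<Longrightarrow> fb N (xs@[a]) (ys@[b]) g = blockop N a b (fb N xs ys g)"
  by (induction xs ys arbitrary: g rule: list_induct2) auto

lemma duality_Z:
  assumes "length ks = length ls" "\<forall>x\<in>set ks. 0 < x" "\<forall>x\<in>set ls. 0 < x" "1 \<le> N"
  shows "Z N (fb N ks ls f) g = Z N f (fb N (rev ls) (rev ks) g)"
  using assms
proof (induction ks ls arbitrary: f g rule: list_induct2)
  case Nil then show ?case by simp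
next
  case (Cons k ks l ls)
  have "Z N (fb N (k#ks) (l#ls) f) g = Z N (fb N ks ls (blockop N k l f)) g" by simp
  also have "\<dots> = Z N (blockop N k l f) (fb N (rev ls) (rev ks) g)"
    using Cons by simp
  also have "\<dots> = Z N f (blockop N l k (fb N (rev ls) (rev ks) g))"
    using block_lemma Cons.prems by simp
  also have "\<dots> = Z N f (fb N (rev (l#ls)) (rev (k#ks)) g)"
    using fb_snoc[of "rev ls" "rev ks"] Cons.hyps by simp
  finally show ?case .
qed

definition delta0 :: "nat \<Rightarrow> real" where "delta0 \<mu> = (if \<mu> = 0 then 1 else 0)"

lemma Z_delta_right: "1 \<le> N \<Longrightarrow> Z N f delta0 = (\<Sum>\<mu><N. f \<mu>)"
proof -
  assume N: "1 \<le> N"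
  have "\<And>\<mu>. (\<Sum>\<pi><N. f \<mu> * delta0 \<pi> * cc N \<mu> \<pi>) = (\<Sum>\<pi><N. if \<pi> = 0 then f \<mu> else 0)"
    by (rule sum.cong[OF refl]) (simp add: delta0_def cc_0_right)
  then show ?thesis unfolding Z_def using N by (simp add: sum.delta)
qed

lemma Z_delta_left: "1 \<le> N \<Longrightarrow> Z N delta0 g = (\<Sum>\<pi><N. g \<pi>)"
  using Z_delta_right Z_sym by metis

lemma core_duality:
  assumes "length ks = length ls" "\<forall>x\<in>set ks. 0 < x" "\<forall>x\<in>set ls. 0 < x" "1 \<le> N"
  shows "(\<Sum>\<mu><N. fb N ks ls delta0 \<mu>) = (\<Sum>\<pi><N. fb N (rev ls) (rev ks) delta0 \<pi>)"
  using duality_Z[OF assms, of delta0 delta0] Z_delta_right[OF assms(4)] Z_delta_left[OF assms(4)]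
  by simp


definition ch :: "nat \<Rightarrow> nat \<Rightarrow> nat \<Rightarrow> nat list set" where
  "ch N lo l = {b. length b = l \<and> sorted b \<and> (\<forall>x\<in>set b. lo < x \<and> x < N)}"

definition blk :: "nat \<Rightarrow> nat \<Rightarrow> nat list \<Rightarrow> real" where
  "blk N k b = 1 / ((\<Prod>a<length b - 1. (real N - real (b!a))) * real (b!(length b - 1)) ^ k)"

definition Ys :: "nat \<Rightarrow> (nat \<Rightarrow> real) \<Rightarrow> nat \<Rightarrow> real" where
  "Ys N h \<rho> = (\<Sum>\<mu>\<in>{\<rho>..<N-1}. h \<mu> / real (N - 1 - \<mu>))"
definition Ps :: "nat \<Rightarrow> (nat \<Rightarrow> real) \<Rightarrow> nat \<Rightarrow> real" where
  "Ps N h \<rho> = (\<Sum>\<mu>\<in>{\<rho><..<N}. h \<mu>)"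

lemma finite_ch: "finite (ch N lo l)"
proof -
  have "ch N lo l \<subseteq> {b. set b \<subseteq> {..<N} \<and> length b = l}" unfolding ch_def by auto
  moreover have "finite {b. set b \<subseteq> {..<N} \<and> length b = l}" by (rule finite_lists_length_eq) simp
  ultimately show ?thesis by (rule finite_subset)
qed

lemma adjY: "(\<Sum>\<mu><N. opY N f \<mu> * h \<mu>) = (\<Sum>\<rho><N. f \<rho> * Ys N h \<rho>)"
proof (cases N)
  case 0 then show ?thesis by simp
next
  case (Suc M)
  have "(\<Sum>\<mu><N. opY N f \<mu> * h \<mu>) = (\<Sum>\<mu><M. (\<Sum>\<rho>\<le>\<mu>. f \<rho> * (h \<mu> / real (N - 1 - \<mu>))))"
    unfolding Suc by (simp add: opY_def sum_distrib_right sum_divide_distrib)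
  also have "\<dots> = (\<Sum>\<rho><M. \<Sum>\<mu>\<in>{\<rho>..<M}. f \<rho> * (h \<mu> / real (N - 1 - \<mu>)))"
    by (rule tri_le)
  also have "\<dots> = (\<Sum>\<rho><M. f \<rho> * Ys N h \<rho>)"
    unfolding Ys_def Suc by (simp add: sum_distrib_left)
  also have "\<dots> = (\<Sum>\<rho><N. f \<rho> * Ys N h \<rho>)"
    unfolding Suc by (simp add: Ys_def)
  finally show ?thesis .
qed

lemma adjP: "(\<Sum>\<mu><N. opP N f \<mu> * h \<mu>) = (\<Sum>\<rho><N. f \<rho> * Ps N h \<rho>)"
proof -
  have "(\<Sum>\<mu><N. opP N f \<mu> * h \<mu>) = (\<Sum>\<mu><N. \<Sum>\<rho><\<mu>. f \<rho> * h \<mu>)"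
    by (rule sum.cong[OF refl]) (auto simp: opP_def sum_distrib_right Suc_le_eq)
  also have "\<dots> = (\<Sum>\<rho><N. \<Sum>\<mu>\<in>{\<rho><..<N}. f \<rho> * h \<mu>)" by (rule tri_lt)
  finally show ?thesis unfolding Ps_def by (simp add: sum_distrib_left)
qed

lemma adjX: "(\<Sum>\<mu><N. opX f \<mu> * h \<mu>) = (\<Sum>\<mu><N. f \<mu> * opX h \<mu>)"
  unfolding opX_def by simp

lemma adjXpow: "(\<Sum>\<mu><N. (opX ^^ k) f \<mu> * h \<mu>) = (\<Sum>\<mu><N. f \<mu> * (opX ^^ k) h \<mu>)"
proof (induction k arbitrary: h)
  case 0 then show ?case by simp
next
  case (Suc k)
  have "(\<Sum>\<mu><N. (opX ^^ Suc k) f \<mu> * h \<mu>) = (\<Sum>\<mu><N. (opX ^^ k) f \<mu> * opX h \<mu>)"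
    using adjX by simp
  also have "\<dots> = (\<Sum>\<mu><N. f \<mu> * (opX ^^ k) (opX h) \<mu>)" by (rule Suc.IH)
  finally show ?case by (simp add: funpow_Suc_right del: funpow.simps)
qed

lemma adjYpow: "(\<Sum>\<mu><N. (opY N ^^ j) f \<mu> * h \<mu>) = (\<Sum>\<mu><N. f \<mu> * (Ys N ^^ j) h \<mu>)"
proof (induction j arbitrary: h)
  case 0 then show ?case by simp
next
  case (Suc j)
  have "(\<Sum>\<mu><N. (opY N ^^ Suc j) f \<mu> * h \<mu>) = (\<Sum>\<mu><N. (opY N ^^ j) f \<mu> * Ys N h \<mu>)"
    using adjY by simp
  also have "\<dots> = (\<Sum>\<mu><N. f \<mu> * (Ys N ^^ j) (Ys N h) \<mu>)" by (rule Suc.IH)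
  finally show ?case by (simp add: funpow_Suc_right del: funpow.simps)
qed

lemma adj_block: "(\<Sum>\<mu><N. blockop N k l f \<mu> * g \<mu>) = (\<Sum>\<rho><N. f \<rho> * (Ys N ^^ (l-1)) (Ps N ((opX ^^ k) g)) \<rho>)"
  unfolding blockop_def adjXpow adjP adjYpow ..

lemma opX_pow_val: "(opX ^^ k) g m = g m / real m ^ k"
  by (induction k) (auto simp: opX_def field_simps)

lemma ch_one: "ch N lo (Suc 0) = (\<lambda>m. [m]) ` {lo<..<N}"
  unfolding ch_def by (auto simp: length_Suc_conv)

lemma ch_cons: "ch N lo (Suc (Suc j)) = (\<lambda>(m,b). m#b) ` (SIGMA m:{lo<..<N}. ch N (m-1) (Suc j))"
proof safe
  fix b assume "b \<in> ch N lo (Suc (Suc j))"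
  then obtain m b' where b: "b = m # b'" "length b' = Suc j" "sorted (m#b')" "\<forall>x\<in>set (m#b'). lo < x \<and> x < N"
    unfolding ch_def by (auto simp: length_Suc_conv)
  then have "b' \<in> ch N (m-1) (Suc j)" "m \<in> {lo<..<N}" unfolding ch_def by auto
  then show "b \<in> (\<lambda>(m,b). m#b) ` (SIGMA m:{lo<..<N}. ch N (m-1) (Suc j))" using b(1) by force
next
  fix m b assume "m \<in> {lo<..<N}" "b \<in> ch N (m-1) (Suc j)"
  then show "m # b \<in> ch N lo (Suc (Suc j))" unfolding ch_def by auto
qed

lemma blk_one: "blk N k [m] = 1 / real m ^ k" unfolding blk_def by simp

lemma blk_cons: "b \<noteq> [] \<Longrightarrow> blk N k (m # b) = blk N k b / (real N - real m)"
proof -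
  assume "b \<noteq> []"
  then obtain n where n: "length b = Suc n" by (cases b) auto
  have "(\<Prod>a<length (m#b) - 1. (real N - real ((m#b)!a))) = (real N - real m) * (\<Prod>a<length b - 1. (real N - real (b!a)))"
  proof -
    have e: "length (m#b) - 1 = Suc n" using n by simp
    show ?thesis by (simp only: e prod.lessThan_Suc_shift) (simp add: n)
  qed
  moreover have "(m#b)!(length (m#b) - 1) = b!(length b - 1)" using n by simp
  ultimately show ?thesis unfolding blk_def by simp
qed

lemma chain_lemma:
  "(\<Sum>b\<in>ch N lo (Suc j). blk N k b * g (last b)) = ((Ys N ^^ j) (Ps N ((opX ^^ k) g))) lo"
proof (induction j arbitrary: lo)
  case 0
  have "(\<Sum>b\<in>ch N lo (Suc 0). blk N k b * g (last b)) = (\<Sum>m\<in>{lo<..<N}. blk N k [m] * g (last [m]))"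
    unfolding ch_one by (subst sum.reindex) (auto simp: inj_on_def)
  also have "\<dots> = Ps N ((opX ^^ k) g) lo"
    unfolding Ps_def opX_pow_val blk_one by simp
  finally show ?case by simp
next
  case (Suc j)
  have "(\<Sum>b\<in>ch N lo (Suc (Suc j)). blk N k b * g (last b))
      = (\<Sum>(m,b)\<in>(SIGMA m:{lo<..<N}. ch N (m-1) (Suc j)). blk N k (m#b) * g (last (m#b)))"
    unfolding ch_cons by (subst sum.reindex) (auto simp: inj_on_def case_prod_beta)
  also have "\<dots> = (\<Sum>m\<in>{lo<..<N}. \<Sum>b\<in>ch N (m-1) (Suc j). blk N k (m#b) * g (last (m#b)))"
    by (rule sum.Sigma[symmetric]) (auto simp: finite_ch)
  also have "\<dots> = (\<Sum>m\<in>{lo<..<N}. (\<Sum>b\<in>ch N (m-1) (Suc j). blk N k b * g (last b)) / (real N - real m))"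
  proof (rule sum.cong[OF refl])
    fix m assume "m \<in> {lo<..<N}"
    have "\<And>b. b \<in> ch N (m-1) (Suc j) \<Longrightarrow> blk N k (m#b) * g (last (m#b)) = blk N k b * g (last b) / (real N - real m)"
      unfolding ch_def by (auto simp: blk_cons)
    then show "(\<Sum>b\<in>ch N (m-1) (Suc j). blk N k (m#b) * g (last (m#b))) = (\<Sum>b\<in>ch N (m-1) (Suc j). blk N k b * g (last b)) / (real N - real m)"
      by (simp add: sum_divide_distrib)
  qed
  also have "\<dots> = (\<Sum>m\<in>{lo<..<N}. ((Ys N ^^ j) (Ps N ((opX ^^ k) g))) (m-1) / (real N - real m))"
    using Suc.IH by simp
  also have "\<dots> = (\<Sum>\<mu>\<in>{lo..<N-1}. ((Ys N ^^ j) (Ps N ((opX ^^ k) g))) \<mu> / real (N - 1 - \<mu>))"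
    by (rule sum.reindex_bij_witness[where i="Suc" and j="\<lambda>m. m - 1"]) (auto simp: of_nat_diff)
  also have "\<dots> = ((Ys N ^^ Suc j) (Ps N ((opX ^^ k) g))) lo"
    by (simp add: Ys_def)
  finally show ?case .
qed


definition admA :: "nat \<Rightarrow> nat list \<Rightarrow> nat list list \<Rightarrow> bool" where
  "admA N ls ms \<longleftrightarrow> length ms = length ls \<and>
     (\<forall>j<length ms. length (ms!j) = ls!j \<and> sorted (ms!j) \<and> (\<forall>x\<in>set (ms!j). 0 < x \<and> x < N)) \<and>
     (\<forall>j. Suc j < length ms \<longrightarrow> last (ms!j) < hd (ms!Suc j))"

lemma adm_alt:
  assumes pos: "\<forall>x\<in>set ls. 0 < x"
  shows "admissible N ls ms \<longleftrightarrow> admA N ls ms"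
proof
  assume a: "admissible N ls ms"
  then have len: "length ms = length ls" and l2: "\<forall>j<length ms. length (ms!j) = ls!j"
    unfolding admissible_def by auto
  have ne: "\<And>j. j < length ms \<Longrightarrow> ms!j \<noteq> []"
    using l2 len pos by (metis length_0_conv less_not_refl nth_mem)
  show "admA N ls ms" unfolding admA_def
  proof (intro conjI allI impI ballI)
    show "length ms = length ls" by (rule len)
  next
    fix j assume j: "j < length ms"
    show "length (ms!j) = ls!j" using l2 j by auto
    show "sorted (ms!j)" using a j unfolding admissible_def sorted_iff_nth_Suc by auto
  next
    fix j x assume j: "j < length ms" and x: "x \<in> set (ms!j)"
    then obtain a where "a < length (ms!j)" "x = ms!j!a" by (auto simp: in_set_conv_nth)
    then show "0 < x" "x < N" using a j unfolding admissible_def by auto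
  next
    fix j assume j: "Suc j < length ms"
    have "last (ms!j) = ms!j!(length (ms!j) - 1)" using ne[of j] j by (simp add: last_conv_nth)
    moreover have "hd (ms!Suc j) = ms!Suc j!0" using ne[of "Suc j"] j by (simp add: hd_conv_nth)
    ultimately show "last (ms!j) < hd (ms!Suc j)" using a j unfolding admissible_def by auto
  qed
next
  assume a: "admA N ls ms"
  then have len: "length ms = length ls" and l2: "\<forall>j<length ms. length (ms!j) = ls!j"
    unfolding admA_def by auto
  have ne: "\<And>j. j < length ms \<Longrightarrow> ms!j \<noteq> []"
    using l2 len pos by (metis length_0_conv less_not_refl nth_mem)
  show "admissible N ls ms" unfolding admissible_def
  proof (intro conjI allI impI)
    show "length ms = length ls" by (rule len)
  next
    fix j assume j: "j < length ms"
    show "length (ms!j) = ls!j" using l2 j by auto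
  next
    fix j a assume j: "j < length ms" and aa: "a < length (ms!j)"
    then have "ms!j!a \<in> set (ms!j)" by simp
    then show "0 < ms!j!a" "ms!j!a < N" using a j unfolding admA_def by auto
  next
    fix j a assume j: "j < length ms" and aa: "a + 1 < length (ms!j)"
    then show "ms!j!a \<le> ms!j!(a+1)" using a j unfolding admA_def sorted_iff_nth_Suc by auto
  next
    fix j assume j: "j + 1 < length ms"
    have "last (ms!j) = ms!j!(length (ms!j) - 1)" using ne[of j] j by (simp add: last_conv_nth)
    moreover have "hd (ms!Suc j) = ms!Suc j!0" using ne[of "Suc j"] j by (simp add: hd_conv_nth)
    ultimately show "ms!j!(length (ms!j) - 1) < ms!(j+1)!0" using a j unfolding admA_def by auto
  qed
qed

definition lidx :: "nat list list \<Rightarrow> nat" where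
  "lidx ms = (if ms = [] then 0 else last (last ms))"

lemma admA_snoc:
  "admA N (ls@[l]) (ms'@[b]) \<longleftrightarrow> admA N ls ms' \<and> length b = l \<and> sorted b \<and> (\<forall>x\<in>set b. 0 < x \<and> x < N)
     \<and> (ms' \<noteq> [] \<longrightarrow> last (last ms') < hd b)"
proof
  assume a: "admA N (ls@[l]) (ms'@[b])"
  then have len: "length ms' = length ls" unfolding admA_def by simp
  have A: "\<forall>j<length ms'. length (ms'!j) = ls!j \<and> sorted (ms'!j) \<and> (\<forall>x\<in>set (ms'!j). 0 < x \<and> x < N)"
  proof (intro allI impI)
    fix j assume "j < length ms'"
    then show "length (ms'!j) = ls!j \<and> sorted (ms'!j) \<and> (\<forall>x\<in>set (ms'!j). 0 < x \<and> x < N)"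
      using a len unfolding admA_def
      by (metis (no_types, lifting) length_append_singleton less_SucI nth_append)
  qed
  have B: "\<forall>j. Suc j < length ms' \<longrightarrow> last (ms'!j) < hd (ms'!Suc j)"
  proof (intro allI impI)
    fix j assume "Suc j < length ms'"
    then show "last (ms'!j) < hd (ms'!Suc j)"
      using a unfolding admA_def
      by (metis (no_types, lifting) Suc_lessD length_append_singleton less_SucI nth_append)
  qed
  have C: "length b = l \<and> sorted b \<and> (\<forall>x\<in>set b. 0 < x \<and> x < N)"
    using a len unfolding admA_def
    by (metis length_append_singleton lessI nth_append_length)
  have D: "ms' \<noteq> [] \<longrightarrow> last (last ms') < hd b"
  proof
    assume "ms' \<noteq> []"
    then obtain n where n: "length ms' = Suc n" by (cases ms') auto
    have "last (last ms') = last ((ms'@[b])!n)" using n \<open>ms' \<noteq> []\<close> by (simp add: nth_append last_conv_nth)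
    moreover have "hd b = hd ((ms'@[b])!Suc n)" using n by (simp add: nth_append)
    moreover have "\<forall>j. Suc j < length (ms'@[b]) \<longrightarrow> last ((ms'@[b])!j) < hd ((ms'@[b])!Suc j)"
      using a unfolding admA_def by blast
    then have "last ((ms'@[b])!n) < hd ((ms'@[b])!Suc n)" using n by simp
    ultimately show "last (last ms') < hd b" by simp
  qed
  show "admA N ls ms' \<and> length b = l \<and> sorted b \<and> (\<forall>x\<in>set b. 0 < x \<and> x < N) \<and> (ms' \<noteq> [] \<longrightarrow> last (last ms') < hd b)"
    using A B C D len unfolding admA_def by blast
next
  assume a: "admA N ls ms' \<and> length b = l \<and> sorted b \<and> (\<forall>x\<in>set b. 0 < x \<and> x < N) \<and> (ms' \<noteq> [] \<longrightarrow> last (last ms') < hd b)"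
  then have len: "length ms' = length ls" unfolding admA_def by simp
  show "admA N (ls@[l]) (ms'@[b])" unfolding admA_def
  proof (intro conjI)
    show "length (ms'@[b]) = length (ls@[l])" using len by simp
  next
    show "\<forall>j<length (ms'@[b]). length ((ms'@[b])!j) = (ls@[l])!j \<and> sorted ((ms'@[b])!j) \<and> (\<forall>x\<in>set ((ms'@[b])!j). 0 < x \<and> x < N)"
    proof (intro allI impI)
      fix j assume j: "j < length (ms'@[b])"
      show "length ((ms'@[b])!j) = (ls@[l])!j \<and> sorted ((ms'@[b])!j) \<and> (\<forall>x\<in>set ((ms'@[b])!j). 0 < x \<and> x < N)"
      proof (cases "j < length ms'")
        case True then show ?thesis using a len unfolding admA_def by (simp add: nth_append)
      next
        case False then have "j = length ms'" using j by simp
        then show ?thesis using a len by (simp add: nth_append)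
      qed
    qed
  next
    show "\<forall>j. Suc j < length (ms'@[b]) \<longrightarrow> last ((ms'@[b])!j) < hd ((ms'@[b])!Suc j)"
    proof (intro allI impI)
      fix j assume j: "Suc j < length (ms'@[b])"
      show "last ((ms'@[b])!j) < hd ((ms'@[b])!Suc j)"
      proof (cases "Suc j < length ms'")
        case True then show ?thesis using a unfolding admA_def by (simp add: nth_append)
      next
        case False then have jj: "Suc j = length ms'" using j by simp
        then have "ms' \<noteq> []" by auto
        have "last ms' = ms'!j" using jj \<open>ms' \<noteq> []\<close> by (simp add: last_conv_nth flip: jj)
        then show ?thesis using a jj \<open>ms' \<noteq> []\<close> by (simp add: nth_append)
      qed
    qed
  qed
qed

lemma sorted_lower:
  assumes "sorted b" "b \<noteq> []"
  shows "(\<forall>x\<in>set b. lo < x) \<longleftrightarrow> lo < hd b"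
  using assms by (cases b) auto

lemma adm_snoc_set:
  assumes pos: "\<forall>x\<in>set ls. 0 < x" and l: "0 < l"
  shows "{ms. admissible N (ls@[l]) ms} = (\<lambda>(ms',b). ms'@[b]) ` (SIGMA ms':{ms'. admissible N ls ms'}. ch N (lidx ms') l)"
proof -
  have pos': "\<forall>x\<in>set (ls@[l]). 0 < x" using pos l by auto
  have key: "admA N (ls@[l]) (ms'@[b]) \<longleftrightarrow> admA N ls ms' \<and> b \<in> ch N (lidx ms') l" for ms' b
    proof (cases "b = []")
      case True
      then show ?thesis unfolding admA_snoc ch_def using l by auto
    next
      case False
      have "(\<forall>x\<in>set b. 0 < x \<and> x < N) \<and> (ms' \<noteq> [] \<longrightarrow> last (last ms') < hd b) \<longleftrightarrow>
            (\<forall>x\<in>set b. lidx ms' < x \<and> x < N)" if "sorted b"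
      proof -
        have "(\<forall>x\<in>set b. 0 < x) \<longleftrightarrow> 0 < hd b" using sorted_lower[OF that False] .
        moreover have "(\<forall>x\<in>set b. last (last ms') < x) \<longleftrightarrow> last (last ms') < hd b" using sorted_lower[OF that False] .
        ultimately show ?thesis unfolding lidx_def by (cases "ms' = []") auto
      qed
      then show ?thesis unfolding admA_snoc ch_def by auto
    qed
  show ?thesis
  proof (rule set_eqI, rule iffI)
    fix ms assume "ms \<in> {ms. admissible N (ls@[l]) ms}"
    then have a: "admA N (ls@[l]) ms" using adm_alt[OF pos'] by simp
    then have "ms \<noteq> []" unfolding admA_def by auto
    then obtain ms' b where ms: "ms = ms'@[b]" by (metis append_butlast_last_id)
    then have "admA N ls ms' \<and> b \<in> ch N (lidx ms') l" using a key by simp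
    then show "ms \<in> (\<lambda>(ms',b). ms'@[b]) ` (SIGMA ms':{ms'. admissible N ls ms'}. ch N (lidx ms') l)"
      using ms adm_alt[OF pos] by force
  next
    fix ms assume "ms \<in> (\<lambda>(ms',b). ms'@[b]) ` (SIGMA ms':{ms'. admissible N ls ms'}. ch N (lidx ms') l)"
    then obtain ms' b where "ms = ms'@[b]" "admissible N ls ms'" "b \<in> ch N (lidx ms') l" by auto
    then show "ms \<in> {ms. admissible N (ls@[l]) ms}"
      using key adm_alt[OF pos] adm_alt[OF pos'] by simp
  qed
qed


lemma finite_adm: "finite {ms. admissible N ls ms}"
proof -
  define B where "B = {b. set b \<subseteq> {..<N} \<and> length b \<le> sum_list ls}"
  have fB: "finite B" unfolding B_def by (rule finite_lists_length_le) simp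
  have "{ms. admissible N ls ms} \<subseteq> {ms. set ms \<subseteq> B \<and> length ms = length ls}"
  proof safe
    fix ms assume a: "admissible N ls ms"
    then show "length ms = length ls" unfolding admissible_def by simp
    fix b assume "b \<in> set ms"
    then obtain j where j: "j < length ms" "b = ms!j" by (auto simp: in_set_conv_nth)
    have "length b = ls!j" using a j unfolding admissible_def by simp
    moreover have "ls!j \<le> sum_list ls" using a j unfolding admissible_def by (simp add: member_le_sum_list)
    moreover have "set b \<subseteq> {..<N}" using a j unfolding admissible_def by (auto simp: in_set_conv_nth)
    ultimately show "b \<in> B" unfolding B_def by simp
  qed
  moreover have "finite {ms. set ms \<subseteq> B \<and> length ms = length ls}" by (rule finite_lists_length_eq[OF fB])
  ultimately show ?thesis by (rule finite_subset)
qed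

lemma lhs_term_snoc:
  assumes "length ms' = length ks" "length ks = length ls" "length b = l"
  shows "lhs_term N (ks@[k]) (ls@[l]) (ms'@[b]) = lhs_term N ks ls ms' * blk N k b"
proof -
  have "lhs_term N (ks@[k]) (ls@[l]) (ms'@[b]) =
     (\<Prod>j<length ks. 1 / ((\<Prod>a<(ls@[l])!j - 1. (real N - real ((ms'@[b])!j!a)))
                           * real ((ms'@[b])!j!((ls@[l])!j - 1)) ^ ((ks@[k])!j))) * blk N k b"
    unfolding lhs_term_def using assms by (simp add: blk_def nth_append)
  also have "\<dots> = lhs_term N ks ls ms' * blk N k b"
    unfolding lhs_term_def using assms by (auto intro!: prod.cong simp: nth_append)
  finally show ?thesis .
qed

lemma bridge:
  assumes "length ks = length ls" "\<forall>x\<in>set ls. 0 < x" "1 \<le> N"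
  shows "(\<Sum>ms\<in>{ms. admissible N ls ms}. lhs_term N ks ls ms * g (lidx ms)) = (\<Sum>\<mu><N. fb N ks ls delta0 \<mu> * g \<mu>)"
  using assms
proof (induction ks arbitrary: ls g rule: rev_induct)
  case Nil
  then have ls: "ls = []" by simp
  have "{ms. admissible N [] ms} = {[]}" unfolding admissible_def by auto
  then have "(\<Sum>ms\<in>{ms. admissible N ls ms}. lhs_term N [] ls ms * g (lidx ms)) = g 0"
    using ls by (simp add: lhs_term_def lidx_def)
  moreover have "(\<Sum>\<mu><N. fb N [] ls delta0 \<mu> * g \<mu>) = g 0"
  proof -
    have "(\<Sum>\<mu><N. fb N [] ls delta0 \<mu> * g \<mu>) = (\<Sum>\<mu><N. if \<mu> = 0 then g 0 else 0)"
      using ls by (intro sum.cong) (auto simp: delta0_def)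
    then show ?thesis using Nil.prems by (simp add: sum.delta)
  qed
  ultimately show ?case by simp
next
  case (snoc k ks ls g)
  obtain ls' l where ls: "ls = ls'@[l]" using snoc.prems(1)
    by (metis length_0_conv neq_Nil_conv rev_exhaust snoc_eq_iff_butlast Nil_is_append_conv)
  have len: "length ks = length ls'" using snoc.prems(1) ls by simp
  have pos: "\<forall>x\<in>set ls'. 0 < x" "0 < l" using snoc.prems(2) ls by auto
  define G where "G lo = (\<Sum>b\<in>ch N lo l. blk N k b * g (last b))" for lo
  have G: "G lo = ((Ys N ^^ (l-1)) (Ps N ((opX ^^ k) g))) lo" for lo
    unfolding G_def using chain_lemma[where N=N and lo=lo and j="l-1" and k=k and g=g] pos(2) by simp
  have "(\<Sum>ms\<in>{ms. admissible N ls ms}. lhs_term N (ks@[k]) ls ms * g (lidx ms))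
     = (\<Sum>(ms',b)\<in>(SIGMA ms':{ms'. admissible N ls' ms'}. ch N (lidx ms') l). lhs_term N (ks@[k]) ls (ms'@[b]) * g (lidx (ms'@[b])))"
    unfolding ls adm_snoc_set[OF pos] by (subst sum.reindex) (auto simp: inj_on_def case_prod_beta)
  also have "\<dots> = (\<Sum>ms'\<in>{ms'. admissible N ls' ms'}. \<Sum>b\<in>ch N (lidx ms') l. lhs_term N (ks@[k]) ls (ms'@[b]) * g (lidx (ms'@[b])))"
    by (rule sum.Sigma[symmetric]) (auto simp: finite_adm finite_ch)
  also have "\<dots> = (\<Sum>ms'\<in>{ms'. admissible N ls' ms'}. lhs_term N ks ls' ms' * G (lidx ms'))"
  proof (rule sum.cong[OF refl])
    fix ms' assume "ms' \<in> {ms'. admissible N ls' ms'}"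
    then have lm: "length ms' = length ks" using len unfolding admissible_def by simp
    have "\<And>b. b \<in> ch N (lidx ms') l \<Longrightarrow> lhs_term N (ks@[k]) ls (ms'@[b]) * g (lidx (ms'@[b])) = lhs_term N ks ls' ms' * (blk N k b * g (last b))"
      unfolding ls ch_def lidx_def using lm len by (auto simp: lhs_term_snoc)
    then show "(\<Sum>b\<in>ch N (lidx ms') l. lhs_term N (ks@[k]) ls (ms'@[b]) * g (lidx (ms'@[b]))) = lhs_term N ks ls' ms' * G (lidx ms')"
      unfolding G_def by (simp add: sum_distrib_left)
  qed
  also have "\<dots> = (\<Sum>\<mu><N. fb N ks ls' delta0 \<mu> * G \<mu>)"
    by (rule snoc.IH) (use len pos snoc.prems in auto)
  also have "\<dots> = (\<Sum>\<mu><N. blockop N k l (fb N ks ls' delta0) \<mu> * g \<mu>)"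
    unfolding adj_block G by simp
  also have "\<dots> = (\<Sum>\<mu><N. fb N (ks@[k]) ls delta0 \<mu> * g \<mu>)"
    unfolding ls using fb_snoc[OF len] by simp
  finally show ?case .
qed


definition rfl :: "nat \<Rightarrow> nat list list \<Rightarrow> nat list list" where
  "rfl N ns = rev (map (\<lambda>b. rev (map (\<lambda>x. N - x) b)) ns)"

lemma rfl_nth:
  "j < length ns \<Longrightarrow> rfl N ns ! j = rev (map (\<lambda>x. N - x) (ns ! (length ns - Suc j)))"
  unfolding rfl_def by (simp add: rev_nth)

lemma length_rfl[simp]: "length (rfl N ns) = length ns" unfolding rfl_def by simp

lemma sorted_rev_map_minus: "sorted b \<Longrightarrow> sorted (rev (map (\<lambda>x. N - x) (b::nat list)))"
  unfolding sorted_wrt_rev sorted_wrt_map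
  by (erule sorted_wrt_mono_rel[rotated]) auto

lemma admA_rfl:
  assumes a: "admA N ks ns" and pos: "\<forall>x\<in>set ks. 0 < x"
  shows "admA N (rev ks) (rfl N ns)"
proof -
  have len: "length ns = length ks" using a unfolding admA_def by simp
  have ne: "\<And>i. i < length ns \<Longrightarrow> ns!i \<noteq> []"
    using a pos len unfolding admA_def by (metis length_0_conv less_not_refl nth_mem)
  show ?thesis unfolding admA_def
  proof (intro conjI)
    show "length (rfl N ns) = length (rev ks)" using len by simp
  next
    show "\<forall>j<length (rfl N ns). length (rfl N ns ! j) = rev ks ! j \<and> sorted (rfl N ns ! j) \<and> (\<forall>x\<in>set (rfl N ns ! j). 0 < x \<and> x < N)"
    proof (intro allI impI)
      fix j assume j: "j < length (rfl N ns)"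
      define i where "i = length ns - Suc j"
      have i: "i < length ns" using j i_def by simp
      have bi: "length (ns!i) = ks!i \<and> sorted (ns!i) \<and> (\<forall>x\<in>set (ns!i). 0 < x \<and> x < N)"
        using a i unfolding admA_def by blast
      have e: "rfl N ns ! j = rev (map (\<lambda>x. N - x) (ns!i))" using j rfl_nth i_def by simp
      have "rev ks ! j = ks ! i" using j len i_def by (simp add: rev_nth)
      then show "length (rfl N ns ! j) = rev ks ! j \<and> sorted (rfl N ns ! j) \<and> (\<forall>x\<in>set (rfl N ns ! j). 0 < x \<and> x < N)"
        unfolding e using bi sorted_rev_map_minus by auto
    qed
  next
    show "\<forall>j. Suc j < length (rfl N ns) \<longrightarrow> last (rfl N ns ! j) < hd (rfl N ns ! Suc j)"
    proof (intro allI impI)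
      fix j assume j: "Suc j < length (rfl N ns)"
      define i where "i = length ns - Suc (Suc j)"
      have i: "Suc i < length ns" using j i_def by simp
      have e1: "rfl N ns ! j = rev (map (\<lambda>x. N - x) (ns!Suc i))" using j rfl_nth i_def
        by (simp add: Suc_diff_Suc)
      have e2: "rfl N ns ! Suc j = rev (map (\<lambda>x. N - x) (ns!i))" using j rfl_nth i_def by simp
      have lt: "last (ns!i) < hd (ns!Suc i)" using a i unfolding admA_def by blast
      have "hd (ns!Suc i) \<in> set (ns!Suc i)" using ne[OF i] by simp
      then have hN: "hd (ns!Suc i) < N" using a i unfolding admA_def by blast
      have "last (rfl N ns ! j) = N - hd (ns!Suc i)" unfolding e1 using ne[OF i]
        by (simp add: last_rev hd_map)
      moreover have "hd (rfl N ns ! Suc j) = N - last (ns!i)" unfolding e2 using ne i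
        by (simp add: hd_rev last_map)
      ultimately show "last (rfl N ns ! j) < hd (rfl N ns ! Suc j)" using lt hN by simp
    qed
  qed
qed

lemma rfl_rfl:
  assumes "\<forall>b\<in>set ns. \<forall>x\<in>set b. x \<le> N"
  shows "rfl N (rfl N ns) = ns"
  using assms unfolding rfl_def by (simp add: rev_map comp_def map_idI)


lemma block_refl:
  assumes k: "length b = k" "1 \<le> k" and lt: "\<forall>x\<in>set b. x < N"
  shows "(\<Prod>a<k - 1. (real N - real (rev (map (\<lambda>x. N - x) b) ! a)))
           * real (rev (map (\<lambda>x. N - x) b) ! (k - 1)) ^ l
       = (real N - real (b!0)) ^ l * (\<Prod>a\<in>{1..<k}. real (b!a))"
proof -
  have p: "(\<Prod>a<k - 1. (real N - real (rev (map (\<lambda>x. N - x) b) ! a))) = (\<Prod>a\<in>{1..<k}. real (b!a))"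
  proof -
    have fa: "\<And>a. a < k - 1 \<Longrightarrow> real N - real (rev (map (\<lambda>x. N - x) b) ! a) = real (b ! (k - 1 - a))"
    proof -
      fix a assume a: "a < k - 1"
      have bN: "b ! (k - Suc a) < N" using lt a k by auto
      show "real N - real (rev (map (\<lambda>x. N - x) b) ! a) = real (b ! (k - 1 - a))"
        using a k bN by (simp add: rev_nth of_nat_diff)
    qed
    show ?thesis
      by (rule prod.reindex_bij_witness[where i="\<lambda>a. k - 1 - a" and j="\<lambda>a. k - 1 - a"]) (auto simp: fa)
  qed
  have b0: "b!0 < N" using lt k by (metis less_le_trans nth_mem zero_less_one)
  have q: "rev (map (\<lambda>x. N - x) b) ! (k - 1) = N - b!0" using k by (simp add: rev_nth)
  show ?thesis unfolding p q using b0 by (simp add: of_nat_diff mult.commute)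
qed

lemma rhs_as_lhs:
  assumes a: "admA N ks ns" and pos: "\<forall>x\<in>set ks. 0 < x" and len: "length ks = length ls"
  shows "rhs_term N ks ls ns = lhs_term N (rev ls) (rev ks) (rfl N ns)"
proof -
  define r where "r = length ks"
  have lns: "length ns = r" using a r_def unfolding admA_def by simp
  have "lhs_term N (rev ls) (rev ks) (rfl N ns)
     = (\<Prod>j<r. 1 / ((\<Prod>a<(rev ks)!j - 1. (real N - real ((rfl N ns)!j!a)))
                           * real ((rfl N ns)!j!((rev ks)!j - 1)) ^ ((rev ls)!j)))"
    unfolding lhs_term_def r_def using len by simp
  also have "\<dots> = (\<Prod>i<r. 1 / ((\<Prod>a<(rev ks)!(r - Suc i) - 1. (real N - real ((rfl N ns)!(r - Suc i)!a)))
                           * real ((rfl N ns)!(r - Suc i)!((rev ks)!(r - Suc i) - 1)) ^ ((rev ls)!(r - Suc i))))"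
    by (rule prod.nat_diff_reindex[symmetric])
  also have "\<dots> = (\<Prod>i<r. 1 / ((real N - real (ns!i!0)) ^ (ls!i) * (\<Prod>a\<in>{1..<ks!i}. real (ns!i!a))))"
  proof (rule prod.cong[OF refl])
    fix i assume i: "i \<in> {..<r}"
    have e1: "(rev ks)!(r - Suc i) = ks!i" using i r_def by (simp add: rev_nth)
    have e2: "(rev ls)!(r - Suc i) = ls!i" using i r_def len by (simp add: rev_nth)
    have e3: "(rfl N ns)!(r - Suc i) = rev (map (\<lambda>x. N - x) (ns!i))" using i lns by (simp add: rfl_nth)
    have bi: "length (ns!i) = ks!i" "\<forall>x\<in>set (ns!i). x < N" using a i lns unfolding admA_def by auto
    have "ks!i > 0" using pos i r_def by simp
    then show "1 / ((\<Prod>a<(rev ks)!(r - Suc i) - 1. (real N - real ((rfl N ns)!(r - Suc i)!a)))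
                           * real ((rfl N ns)!(r - Suc i)!((rev ks)!(r - Suc i) - 1)) ^ ((rev ls)!(r - Suc i)))
        = 1 / ((real N - real (ns!i!0)) ^ (ls!i) * (\<Prod>a\<in>{1..<ks!i}. real (ns!i!a)))"
      unfolding e1 e2 e3 using block_refl[OF bi(1) _ bi(2), of "ls!i"] by simp
  qed
  also have "\<dots> = rhs_term N ks ls ns" unfolding rhs_term_def r_def ..
  finally show ?thesis by simp
qed

theorem rhs_eq:
  assumes pos: "\<forall>x\<in>set ks. 0 < x" and len: "length ks = length ls"
  shows "(\<Sum>ns\<in>{ns. admissible N ks ns}. rhs_term N ks ls ns)
       = (\<Sum>ms\<in>{ms. admissible N (rev ks) ms}. lhs_term N (rev ls) (rev ks) ms)"
proof -
  have pos': "\<forall>x\<in>set (rev ks). 0 < x" using pos by simp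
  have bound: "\<forall>b\<in>set ns. \<forall>x\<in>set b. x \<le> N" if "admA N ks' ns" for ks' ns
  proof (intro ballI)
    fix b x assume "b \<in> set ns" "x \<in> set b"
    then obtain j where "j < length ns" "b = ns!j" by (auto simp: in_set_conv_nth)
    then show "x \<le> N" using that \<open>x \<in> set b\<close> unfolding admA_def by (meson less_imp_le)
  qed
  show ?thesis
  proof (rule sum.reindex_bij_witness[where i="rfl N" and j="rfl N"])
    fix ms assume "ms \<in> {ms. admissible N (rev ks) ms}"
    then have m: "admA N (rev ks) ms" using adm_alt[OF pos'] by simp
    show "rfl N (rfl N ms) = ms" by (rule rfl_rfl[OF bound[OF m]])
    show "rfl N ms \<in> {ns. admissible N ks ns}"
      using admA_rfl[OF m pos'] adm_alt[OF pos] by simp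
  next
    fix ns assume "ns \<in> {ns. admissible N ks ns}"
    then have n: "admA N ks ns" using adm_alt[OF pos] by simp
    show "rfl N (rfl N ns) = ns" by (rule rfl_rfl[OF bound[OF n]])
    show "rfl N ns \<in> {ms. admissible N (rev ks) ms}"
      using admA_rfl[OF n pos] adm_alt[OF pos'] by simp
    show "lhs_term N (rev ls) (rev ks) (rfl N ns) = rhs_term N ks ls ns"
      using rhs_as_lhs[OF n pos len] by simp
  qed
qed

theorem mainTheorem12:
  fixes N :: nat and ks ls :: "nat list"
  assumes "0 < N"
    and "length ks = length ls" and "1 \<le> length ks"
    and "\<forall>x\<in>set ks. 0 < x" and "\<forall>x\<in>set ls. 0 < x"
  shows "(\<Sum>ms\<in>{ms. admissible N ls ms}. lhs_term N ks ls ms)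
       = (\<Sum>ns\<in>{ns. admissible N ks ns}. rhs_term N ks ls ns)"
proof -
  have N: "1 \<le> N" using assms by simp
  have "(\<Sum>ms\<in>{ms. admissible N ls ms}. lhs_term N ks ls ms) = (\<Sum>\<mu><N. fb N ks ls delta0 \<mu>)"
    using bridge[OF assms(2) assms(5) N, of "\<lambda>_. 1"] by simp
  also have "\<dots> = (\<Sum>\<pi><N. fb N (rev ls) (rev ks) delta0 \<pi>)"
    by (rule core_duality[OF assms(2) assms(4) assms(5) N])
  also have "\<dots> = (\<Sum>ms\<in>{ms. admissible N (rev ks) ms}. lhs_term N (rev ls) (rev ks) ms)"
    using bridge[of "rev ls" "rev ks" N "\<lambda>_. 1"] assms N by simp
  also have "\<dots> = (\<Sum>ns\<in>{ns. admissible N ks ns}. rhs_term N ks ls ns)"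
    by (rule rhs_eq[symmetric]) (use assms in auto)
  finally show ?thesis .
qed

end
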